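(* Let $\mathcal H$ be a separable Hilbert space with inner product $\langle\cdot,\cdot\rangle$ and norm $\|\cdot\|$. Let $(X_i,Y_i)$, $i=1,\dots,n$, be i.i.d. $\mathcal H\times\mathbb R$-valued random variables satisfying $Y_i=\alpha+\langle X_i,\beta\rangle+\varepsilon_i$, where $\varepsilon_1,\dots,\varepsilon_n$ are independent of $X_1,\dots,X_n$, i.i.d., centred, with cdf twice differentiable with bounded density and bounded derivative of the density. Let $\hat\varepsilon_j=Y_j-\hat\alpha-\langle X_j,\hat\beta\rangle$. Suppose either (i) $\hat\alpha=\overline Y_n-\langle\overline X_n,\hat\beta\rangle$, $\|\hat\beta-\beta\|=o_{\mathbb P}(n^{-1/4})$, $E\|X_1\|^4<\infty$ and $E[\varepsilon_1^2]<\infty$; or (ii) $\alpha=\hat\alpha=0$, $\|\hat\beta-\beta\|=o_{\mathbb P}(n^{-1/4})$, $E[X_1]=0$ and $E\|X_1\|^2<\infty$. Then $\frac1{\sqrt n}\sum_{j=1}^n(\hat\varepsilon_j-\varepsilon_j)^2=o_{\mathbb P}(1)$.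
   Context: $\overline Y_n=\frac1n\sum Y_i$, $\overline X_n=\frac1n\sum X_i$; $\hat\alpha,\hat\beta$ are estimators of $\alpha\in\mathbb R,\beta\in\mathcal H$ computed from the sample. *)

theory Defs
  imports "HOL-Probability.Probability"
begin

definition o_P :: "'a measure \<Rightarrow> (nat \<Rightarrow> 'a \<Rightarrow> real) \<Rightarrow> (nat \<Rightarrow> real) \<Rightarrow> bool" where
  "o_P M Z r \<longleftrightarrow>
     (\<forall>e>0. (\<lambda>n. measure M {\<omega> \<in> space M. e < \<bar>Z n \<omega>\<bar> / r n}) \<longlonglongrightarrow> 0)"

end

theory Submission
  imports Defs "HOL-Real_Asymp.Real_Asymp"
begin

lemma (in prob_space) markov_oP:
  fixes Z :: "nat \<Rightarrow> 'a \<Rightarrow> real"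
  assumes meas: "\<And>n. Z n \<in> borel_measurable M" and int: "\<And>n. integrable M (Z n)"
   and nn: "\<And>n \<omega>. \<omega> \<in> space M \<Longrightarrow> 0 \<le> Z n \<omega>"
   and lim: "(\<lambda>n. expectation (Z n)) \<longlonglongrightarrow> 0"
  shows "o_P M Z (\<lambda>_. 1)"
  unfolding o_P_def
proof (intro allI impI)
  fix e :: real assume e: "0 < e"
  have le: "prob {\<omega> \<in> space M. e < \<bar>Z n \<omega>\<bar> / 1} \<le> expectation (Z n) / e" for n
  proof -
    have "prob {\<omega> \<in> space M. e < \<bar>Z n \<omega>\<bar> / 1} \<le> prob {\<omega> \<in> space M. Z n \<omega> \<ge> e}"
      using nn meas by (intro finite_measure_mono) auto
    also have "\<dots> \<le> expectation (Z n) / e"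
      using int nn e by (intro integral_Markov_inequality_measure[where A="space M"]) auto
    finally show ?thesis .
  qed
  have "(\<lambda>n. expectation (Z n) / e) \<longlonglongrightarrow> 0 / e"
    by (intro tendsto_divide lim) (use e in auto)
  show "(\<lambda>n. prob {\<omega> \<in> space M. e < \<bar>Z n \<omega>\<bar> / 1}) \<longlonglongrightarrow> 0"
  proof (rule tendsto_sandwich[where f="\<lambda>_. 0" and h="\<lambda>n. expectation (Z n) / e"])
    show "\<forall>\<^sub>F n in sequentially. 0 \<le> prob {\<omega> \<in> space M. e < \<bar>Z n \<omega>\<bar> / 1}"
      by (intro always_eventually allI measure_nonneg)
    show "\<forall>\<^sub>F n in sequentially. prob {\<omega> \<in> space M. e < \<bar>Z n \<omega>\<bar> / 1} \<le> expectation (Z n) / e"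
      by (intro always_eventually allI le)
  qed (use \<open>(\<lambda>n. expectation (Z n) / e) \<longlonglongrightarrow> 0 / e\<close> in simp_all)
qed

lemma (in prob_space) add_oP:
  fixes Z A C :: "nat \<Rightarrow> 'a \<Rightarrow> real"
  assumes measA: "\<And>n. A n \<in> borel_measurable M" and measC: "\<And>n. C n \<in> borel_measurable M"
   and oA: "o_P M A (\<lambda>_. 1)" and oC: "o_P M C (\<lambda>_. 1)"
   and bd: "\<And>n \<omega>. \<omega> \<in> space M \<Longrightarrow> \<bar>Z n \<omega>\<bar> \<le> \<bar>A n \<omega>\<bar> + \<bar>C n \<omega>\<bar>"
  shows "o_P M Z (\<lambda>_. 1)"
  unfolding o_P_def
proof (intro allI impI)
  fix e :: real assume e: "0 < e"
  have le: "prob {\<omega> \<in> space M. e < \<bar>Z n \<omega>\<bar> / 1} \<le>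
     prob {\<omega> \<in> space M. e/2 < \<bar>A n \<omega>\<bar> / 1} + prob {\<omega> \<in> space M. e/2 < \<bar>C n \<omega>\<bar> / 1}" for n
  proof -
    have "prob {\<omega> \<in> space M. e < \<bar>Z n \<omega>\<bar> / 1} \<le>
       prob ({\<omega> \<in> space M. e/2 < \<bar>A n \<omega>\<bar> / 1} \<union> {\<omega> \<in> space M. e/2 < \<bar>C n \<omega>\<bar> / 1})"
    proof (intro finite_measure_mono)
      show "{\<omega> \<in> space M. e < \<bar>Z n \<omega>\<bar> / 1} \<subseteq> {\<omega> \<in> space M. e/2 < \<bar>A n \<omega>\<bar> / 1} \<union> {\<omega> \<in> space M. e/2 < \<bar>C n \<omega>\<bar> / 1}"
        using bd[of _ n] by force
    qed (use measA measC in measurable)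
    also have "\<dots> \<le> prob {\<omega> \<in> space M. e/2 < \<bar>A n \<omega>\<bar> / 1} + prob {\<omega> \<in> space M. e/2 < \<bar>C n \<omega>\<bar> / 1}"
      by (intro measure_Un_le) (use measA measC in measurable)
    finally show ?thesis .
  qed
  have e2: "e/2 > 0" using e by simp
  have a: "(\<lambda>n. prob {\<omega> \<in> space M. e/2 < \<bar>A n \<omega>\<bar> / 1}) \<longlonglongrightarrow> 0"
    using oA e2 unfolding o_P_def by blast
  have c: "(\<lambda>n. prob {\<omega> \<in> space M. e/2 < \<bar>C n \<omega>\<bar> / 1}) \<longlonglongrightarrow> 0"
    using oC e2 unfolding o_P_def by blast
  have "(\<lambda>n. prob {\<omega> \<in> space M. e/2 < \<bar>A n \<omega>\<bar> / 1} + prob {\<omega> \<in> space M. e/2 < \<bar>C n \<omega>\<bar> / 1}) \<longlonglongrightarrow> 0 + 0"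
    by (intro tendsto_add a c)
  show "(\<lambda>n. prob {\<omega> \<in> space M. e < \<bar>Z n \<omega>\<bar> / 1}) \<longlonglongrightarrow> 0"
  proof (rule tendsto_sandwich[where f="\<lambda>_. 0"])
    show "\<forall>\<^sub>F n in sequentially. 0 \<le> prob {\<omega> \<in> space M. e < \<bar>Z n \<omega>\<bar> / 1}"
      by (intro always_eventually allI measure_nonneg)
    show "\<forall>\<^sub>F n in sequentially. prob {\<omega> \<in> space M. e < \<bar>Z n \<omega>\<bar> / 1} \<le> prob {\<omega> \<in> space M. e/2 < \<bar>A n \<omega>\<bar> / 1} + prob {\<omega> \<in> space M. e/2 < \<bar>C n \<omega>\<bar> / 1}"
      by (intro always_eventually allI le)
  qed (use \<open>(\<lambda>n. prob {\<omega> \<in> space M. e/2 < \<bar>A n \<omega>\<bar> / 1} + prob {\<omega> \<in> space M. e/2 < \<bar>C n \<omega>\<bar> / 1}) \<longlonglongrightarrow> 0 + 0\<close> in simp_all)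
qed

lemma (in prob_space) mult_oP:
  fixes Z A B :: "nat \<Rightarrow> 'a \<Rightarrow> real"
  assumes measA: "\<And>n. A n \<in> borel_measurable M" and measB: "\<And>n. B n \<in> borel_measurable M"
   and oA: "o_P M A (\<lambda>_. 1)" and intB: "\<And>n. integrable M (B n)"
   and nnB: "\<And>n \<omega>. \<omega> \<in> space M \<Longrightarrow> 0 \<le> B n \<omega>"
   and K: "\<And>n. expectation (B n) \<le> K"
   and bd: "\<And>n \<omega>. \<omega> \<in> space M \<Longrightarrow> \<bar>Z n \<omega>\<bar> \<le> \<bar>A n \<omega>\<bar> * B n \<omega>"
  shows "o_P M Z (\<lambda>_. 1)"
  unfolding o_P_def
proof (intro allI impI LIMSEQ_I)
  fix e :: real assume e: "0 < e"
  fix d :: real assume d: "0 < d"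
  have "0 \<le> expectation (B 0)"
    by (intro integral_nonneg_AE AE_I2 nnB)
  then have K0: "0 \<le> K" using K[of 0] by linarith
  define L where "L = 2 * (K + 1) / d"
  have L: "0 < L" unfolding L_def using K0 d by simp
  have KL: "K / L < d / 2"
    unfolding L_def using K0 d by (simp add: field_simps)
  have PB: "prob {\<omega> \<in> space M. L \<le> B n \<omega>} < d / 2" for n
  proof -
    have "prob {\<omega> \<in> space M. L \<le> B n \<omega>} \<le> expectation (B n) / L"
      using intB nnB L by (intro integral_Markov_inequality_measure[where A="space M"]) auto
    also have "\<dots> \<le> K / L"
      using K[of n] L by (simp add: divide_right_mono)
    finally show ?thesis using KL by linarith
  qed
  have eL: "0 < e / L" using e L by simp
  from oA eL have "(\<lambda>n. prob {\<omega> \<in> space M. e / L < \<bar>A n \<omega>\<bar> / 1}) \<longlonglongrightarrow> 0"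
    unfolding o_P_def by blast
  from LIMSEQ_D[OF this, of "d/2"] d obtain N where
    N: "\<And>n. n \<ge> N \<Longrightarrow> norm (prob {\<omega> \<in> space M. e / L < \<bar>A n \<omega>\<bar> / 1} - 0) < d / 2"
    by auto
  show "\<exists>no. \<forall>n\<ge>no. norm (prob {\<omega> \<in> space M. e < \<bar>Z n \<omega>\<bar> / 1} - 0) < d"
  proof (intro exI allI impI)
    fix n assume n: "N \<le> n"
    have sub: "{\<omega> \<in> space M. e < \<bar>Z n \<omega>\<bar> / 1} \<subseteq>
       {\<omega> \<in> space M. e / L < \<bar>A n \<omega>\<bar> / 1} \<union> {\<omega> \<in> space M. L \<le> B n \<omega>}"
    proof
      fix \<omega> assume w: "\<omega> \<in> {\<omega> \<in> space M. e < \<bar>Z n \<omega>\<bar> / 1}"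
      show "\<omega> \<in> {\<omega> \<in> space M. e / L < \<bar>A n \<omega>\<bar> / 1} \<union> {\<omega> \<in> space M. L \<le> B n \<omega>}"
      proof (rule ccontr)
        assume "\<not> ?thesis"
        with w have a: "\<bar>A n \<omega>\<bar> \<le> e / L" and b: "B n \<omega> \<le> L" and sp: "\<omega> \<in> space M" by auto
        have "\<bar>Z n \<omega>\<bar> \<le> \<bar>A n \<omega>\<bar> * B n \<omega>" using bd sp by blast
        also have "\<dots> \<le> (e / L) * L"
          by (intro mult_mono a b) (use nnB sp eL in auto)
        also have "\<dots> = e" using L by simp
        finally show False using w by simp
      qed
    qed
    have "prob {\<omega> \<in> space M. e < \<bar>Z n \<omega>\<bar> / 1} \<le>
       prob ({\<omega> \<in> space M. e / L < \<bar>A n \<omega>\<bar> / 1} \<union> {\<omega> \<in> space M. L \<le> B n \<omega>})"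
      by (intro finite_measure_mono sub) (use measA measB in measurable)
    also have "\<dots> \<le> prob {\<omega> \<in> space M. e / L < \<bar>A n \<omega>\<bar> / 1} + prob {\<omega> \<in> space M. L \<le> B n \<omega>}"
      by (intro measure_Un_le) (use measA measB in measurable)
    also have "\<dots> < d/2 + d/2"
      using N[OF n] PB[of n] by simp
    finally show "norm (prob {\<omega> \<in> space M. e < \<bar>Z n \<omega>\<bar> / 1} - 0) < d" by simp
  qed
qed

lemma rate_aux:
  fixes x e :: real
  assumes n: "n \<ge> 1" and x: "0 \<le> x" and e: "0 < e"
  shows "(e < \<bar>sqrt (real n) * x\<^sup>2\<bar> / 1) = (sqrt e < \<bar>x\<bar> / real n powr (-1/4))"
proof -
  have np: "0 < real n" using n by simp
  have 1: "\<bar>x\<bar> / real n powr (-1/4) = x * real n powr (1/4)"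
    using x np divide_powr_uminus by auto
  have "(real n powr (1/4))\<^sup>2 = (real n powr (1/4)) powr 2"
    by simp
  also have "\<dots> = real n powr (1/2)"
    by (subst powr_powr) simp
  also have "\<dots> = sqrt (real n)" using np by (simp add: powr_half_sqrt)
  finally have 2: "(x * real n powr (1/4))\<^sup>2 = sqrt (real n) * x\<^sup>2"
    by (simp add: power_mult_distrib)
  have y: "0 \<le> x * real n powr (1/4)" using x by simp
  have "(sqrt e < x * real n powr (1/4)) = (sqrt e < sqrt ((x * real n powr (1/4))\<^sup>2))"
    using y by simp
  also have "\<dots> = (e < (x * real n powr (1/4))\<^sup>2)"
    by (rule real_sqrt_less_iff)
  finally show ?thesis using 1 2 x by simp
qed

lemma (in prob_space) rate_oP:
  fixes D :: "nat \<Rightarrow> 'a \<Rightarrow> real"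
  assumes oD: "o_P M D (\<lambda>n. real n powr (-1/4))"
   and nn: "\<And>n \<omega>. \<omega> \<in> space M \<Longrightarrow> 0 \<le> D n \<omega>"
  shows "o_P M (\<lambda>n \<omega>. sqrt (real n) * (D n \<omega>)\<^sup>2) (\<lambda>_. 1)"
  unfolding o_P_def
proof (intro allI impI)
  fix e :: real assume e: "0 < e"
  have "sqrt e > 0" using e by simp
  with oD have lim: "(\<lambda>n. prob {\<omega> \<in> space M. sqrt e < \<bar>D n \<omega>\<bar> / real n powr (-1/4)}) \<longlonglongrightarrow> 0"
    unfolding o_P_def by blast
  have ev: "\<forall>\<^sub>F n in sequentially. prob {\<omega> \<in> space M. sqrt e < \<bar>D n \<omega>\<bar> / real n powr (-1/4)}
      = prob {\<omega> \<in> space M. e < \<bar>sqrt (real n) * (D n \<omega>)\<^sup>2\<bar> / 1}"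
    unfolding eventually_sequentially
  proof (intro exI allI impI)
    fix n :: nat assume n: "1 \<le> n"
    have "{\<omega> \<in> space M. sqrt e < \<bar>D n \<omega>\<bar> / real n powr (-1/4)}
      = {\<omega> \<in> space M. e < \<bar>sqrt (real n) * (D n \<omega>)\<^sup>2\<bar> / 1}"
      using rate_aux[OF n nn e] by blast
    then show "prob {\<omega> \<in> space M. sqrt e < \<bar>D n \<omega>\<bar> / real n powr (-1/4)}
      = prob {\<omega> \<in> space M. e < \<bar>sqrt (real n) * (D n \<omega>)\<^sup>2\<bar> / 1}" by simp
  qed
  show "(\<lambda>n. prob {\<omega> \<in> space M. e < \<bar>sqrt (real n) * (D n \<omega>)\<^sup>2\<bar> / 1}) \<longlonglongrightarrow> 0"
    using tendsto_cong[OF ev] lim by blast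
qed

lemma inner_sq_le: "(x \<bullet> y)\<^sup>2 \<le> (norm x)\<^sup>2 * (norm y)\<^sup>2" for x y :: "'h::real_inner"
proof -
  have "\<bar>x \<bullet> y\<bar> \<le> norm x * norm y" by (rule Cauchy_Schwarz_ineq2)
  then have "\<bar>x \<bullet> y\<bar>\<^sup>2 \<le> (norm x * norm y)\<^sup>2" by (intro power_mono) auto
  then show ?thesis by (simp add: power_mult_distrib)
qed

lemma sq_diff_le: "(a - b)\<^sup>2 \<le> 2 * a\<^sup>2 + 2 * b\<^sup>2" for a b :: real
proof -
  have "0 \<le> (a + b)\<^sup>2" by simp
  then show ?thesis by (simp add: power2_eq_square algebra_simps)
qed

lemma sq_add_le: "(a + b)\<^sup>2 \<le> 2 * (a\<^sup>2 + b\<^sup>2)" for a b :: real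
proof -
  have "0 \<le> (a - b)\<^sup>2" by simp
  then show ?thesis by (simp add: power2_eq_square algebra_simps)
qed

lemma scale_sq:
  fixes S :: real
  assumes "S \<le> real n * T" "0 \<le> T"
  shows "(1 / sqrt (real n)) * S \<le> sqrt (real n) * T"
proof (cases "n = 0")
  case True then show ?thesis using assms by simp
next
  case False
  then have np: "0 < real n" by simp
  have "(1 / sqrt (real n)) * S \<le> (1 / sqrt (real n)) * (real n * T)"
    using assms np by (intro mult_left_mono) auto
  also have "\<dots> = sqrt (real n) * T"
    using np by (simp add: field_simps)
  finally show ?thesis .
qed

lemma pw_ii:
  fixes X :: "nat \<Rightarrow> 'h::real_inner" and eps Y :: "nat \<Rightarrow> real" and bh \<beta> :: 'h
  assumes Y: "\<And>i. Y i = 0 + X i \<bullet> \<beta> + eps i" and ah: "ah = 0"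
  shows "\<bar>(1 / sqrt (real n)) * (\<Sum>j<n. ((Y j - ah - X j \<bullet> bh) - eps j)\<^sup>2)\<bar>
     \<le> \<bar>sqrt (real n) * (norm (bh - \<beta>))\<^sup>2\<bar> * ((\<Sum>j<n. (norm (X j))\<^sup>2) / real n)"
proof -
  have r: "((Y j - ah - X j \<bullet> bh) - eps j)\<^sup>2 = (X j \<bullet> (bh - \<beta>))\<^sup>2" for j
    using Y[of j] ah by (simp add: inner_diff_right power2_commute)
  have "(\<Sum>j<n. ((Y j - ah - X j \<bullet> bh) - eps j)\<^sup>2) \<le> (\<Sum>j<n. (norm (X j))\<^sup>2 * (norm (bh - \<beta>))\<^sup>2)"
    unfolding r by (intro sum_mono inner_sq_le)
  also have "\<dots> = (\<Sum>j<n. (norm (X j))\<^sup>2) * (norm (bh - \<beta>))\<^sup>2"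
    by (simp add: sum_distrib_right)
  also have "\<dots> = real n * ((norm (bh - \<beta>))\<^sup>2 * ((\<Sum>j<n. (norm (X j))\<^sup>2) / real n))"
    by (cases "n = 0") simp_all
  finally have "(1 / sqrt (real n)) * (\<Sum>j<n. ((Y j - ah - X j \<bullet> bh) - eps j)\<^sup>2)
     \<le> sqrt (real n) * ((norm (bh - \<beta>))\<^sup>2 * ((\<Sum>j<n. (norm (X j))\<^sup>2) / real n))"
    by (rule scale_sq) (simp add: sum_nonneg)
  then show ?thesis by (simp add: sum_nonneg mult.assoc)
qed

lemma pw_i:
  fixes X :: "nat \<Rightarrow> 'h::real_inner" and eps Y :: "nat \<Rightarrow> real" and bh \<beta> :: 'h
  assumes Y: "\<And>i. Y i = \<alpha> + X i \<bullet> \<beta> + eps i"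
   and ah: "ah = (\<Sum>i<n. Y i) / real n - ((1 / real n) *\<^sub>R (\<Sum>i<n. X i)) \<bullet> bh"
  shows "\<bar>(1 / sqrt (real n)) * (\<Sum>j<n. ((Y j - ah - X j \<bullet> bh) - eps j)\<^sup>2)\<bar>
     \<le> \<bar>sqrt (real n) * (norm (bh - \<beta>))\<^sup>2\<bar> * (8 * ((\<Sum>j<n. (norm (X j))\<^sup>2) / real n))
       + \<bar>2 * sqrt (real n) * ((\<Sum>j<n. eps j) / real n)\<^sup>2\<bar>"
proof (cases "n = 0")
  case True then show ?thesis by simp
next
  case False
  then have np: "0 < real n" by simp
  define Xb where "Xb = (1 / real n) *\<^sub>R (\<Sum>i<n. X i)"
  define D where "D = bh - \<beta>"
  define eb where "eb = (\<Sum>j<n. eps j) / real n"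
  define B where "B = (\<Sum>j<n. (norm (X j))\<^sup>2) / real n"
  have sumY: "(\<Sum>i<n. Y i) = real n * \<alpha> + (\<Sum>i<n. X i) \<bullet> \<beta> + (\<Sum>i<n. eps i)"
    by (simp add: Y sum.distrib inner_sum_left)
  have ah2: "ah = \<alpha> + Xb \<bullet> \<beta> + eb - Xb \<bullet> bh"
    using np unfolding ah sumY Xb_def eb_def by (simp add: field_simps)
  have r: "(Y j - ah - X j \<bullet> bh) - eps j = (Xb - X j) \<bullet> D - eb" for j
    unfolding ah2 Y D_def by (simp add: inner_diff_left inner_diff_right)
  have Xb: "(norm Xb)\<^sup>2 \<le> B"
  proof -
    have "norm Xb \<le> (\<Sum>i<n. norm (X i)) / real n"
      unfolding Xb_def using np norm_sum[of X "{..<n}"] by (simp add: divide_right_mono)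
    then have "(norm Xb)\<^sup>2 \<le> ((\<Sum>i<n. norm (X i)) / real n)\<^sup>2"
      by (intro power_mono) auto
    also have "\<dots> = (\<Sum>i<n. norm (X i))\<^sup>2 / (real n)\<^sup>2" by (simp add: power_divide)
    also have "\<dots> \<le> ((\<Sum>i<n. (norm (X i))\<^sup>2) * real n) / (real n)\<^sup>2"
      using sum_squared_le_sum_of_squares[of "\<lambda>i. norm (X i)" "{..<n}"]
      by (intro divide_right_mono) auto
    also have "\<dots> = B" unfolding B_def using np by (simp add: power2_eq_square)
    finally show ?thesis .
  qed
  have each: "((Y j - ah - X j \<bullet> bh) - eps j)\<^sup>2 \<le> 4 * ((norm Xb)\<^sup>2 + (norm (X j))\<^sup>2) * (norm D)\<^sup>2 + 2 * eb\<^sup>2" for j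
  proof -
    have "((Xb - X j) \<bullet> D - eb)\<^sup>2 \<le> 2 * ((Xb - X j) \<bullet> D)\<^sup>2 + 2 * eb\<^sup>2"
      by (rule sq_diff_le)
    also have "((Xb - X j) \<bullet> D)\<^sup>2 \<le> (norm (Xb - X j))\<^sup>2 * (norm D)\<^sup>2" by (rule inner_sq_le)
    also have "(norm (Xb - X j))\<^sup>2 \<le> 2 * ((norm Xb)\<^sup>2 + (norm (X j))\<^sup>2)"
    proof -
      have "norm (Xb - X j) \<le> norm Xb + norm (X j)" by (rule norm_triangle_ineq4)
      then have "(norm (Xb - X j))\<^sup>2 \<le> (norm Xb + norm (X j))\<^sup>2" by (intro power_mono) auto
      also have "\<dots> \<le> 2 * ((norm Xb)\<^sup>2 + (norm (X j))\<^sup>2)"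
        by (rule sq_add_le)
      finally show ?thesis .
    qed
    finally show ?thesis unfolding r by (simp add: mult_right_mono algebra_simps)
  qed
  have "(\<Sum>j<n. ((Y j - ah - X j \<bullet> bh) - eps j)\<^sup>2) \<le>
      (\<Sum>j<n. 4 * ((norm Xb)\<^sup>2 + (norm (X j))\<^sup>2) * (norm D)\<^sup>2 + 2 * eb\<^sup>2)"
    by (intro sum_mono each)
  also have "\<dots> = (\<Sum>j<n. (4 * (norm D)\<^sup>2 * (norm Xb)\<^sup>2 + 2 * eb\<^sup>2) + (4 * (norm D)\<^sup>2) * (norm (X j))\<^sup>2)"
    by (intro sum.cong) (simp_all add: algebra_simps)
  also have "\<dots> = real n * (4 * (norm D)\<^sup>2 * (norm Xb)\<^sup>2 + 2 * eb\<^sup>2) + (4 * (norm D)\<^sup>2) * (\<Sum>j<n. (norm (X j))\<^sup>2)"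
    by (simp add: sum.distrib sum_distrib_left)
  also have "(\<Sum>j<n. (norm (X j))\<^sup>2) = real n * B" unfolding B_def using np by simp
  also have "real n * (4 * (norm D)\<^sup>2 * (norm Xb)\<^sup>2 + 2 * eb\<^sup>2) + (4 * (norm D)\<^sup>2) * (real n * B)
     = 4 * (norm D)\<^sup>2 * (real n * (norm Xb)\<^sup>2 + real n * B) + real n * (2 * eb\<^sup>2)"
    by (simp add: algebra_simps)
  also have "\<dots> \<le> 4 * (norm D)\<^sup>2 * (real n * B + real n * B) + real n * (2 * eb\<^sup>2)"
    using Xb np by (intro add_mono mult_left_mono) auto
  also have "\<dots> = real n * ((norm D)\<^sup>2 * (8 * B) + 2 * eb\<^sup>2)" by (simp add: algebra_simps)
  finally have "(1 / sqrt (real n)) * (\<Sum>j<n. ((Y j - ah - X j \<bullet> bh) - eps j)\<^sup>2)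
       \<le> sqrt (real n) * ((norm D)\<^sup>2 * (8 * B) + 2 * eb\<^sup>2)"
    by (rule scale_sq) (simp add: B_def sum_nonneg)
  then show ?thesis
    unfolding D_def[symmetric] eb_def[symmetric] B_def[symmetric]
    by (simp add: sum_nonneg algebra_simps)
qed

lemma (in prob_space) ident_transfer:
  fixes U V :: "'a \<Rightarrow> 'c::{second_countable_topology, topological_space}" and f :: "'c \<Rightarrow> real"
  assumes d: "distr M borel U = distr M borel V"
   and U: "U \<in> borel_measurable M" and V: "V \<in> borel_measurable M"
   and f: "f \<in> borel_measurable borel"
  shows "integrable M (\<lambda>\<omega>. f (U \<omega>)) = integrable M (\<lambda>\<omega>. f (V \<omega>))"
    and "integral\<^sup>L M (\<lambda>\<omega>. f (U \<omega>)) = integral\<^sup>L M (\<lambda>\<omega>. f (V \<omega>))"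
proof -
  show "integrable M (\<lambda>\<omega>. f (U \<omega>)) = integrable M (\<lambda>\<omega>. f (V \<omega>))"
    using integrable_distr_eq[OF U f] integrable_distr_eq[OF V f] d by simp
  show "integral\<^sup>L M (\<lambda>\<omega>. f (U \<omega>)) = integral\<^sup>L M (\<lambda>\<omega>. f (V \<omega>))"
    using integral_distr[OF U f] integral_distr[OF V f] d by simp
qed

lemma (in prob_space) var_sum:
  fixes e :: "nat \<Rightarrow> 'a \<Rightarrow> real"
  assumes ind: "indep_vars (\<lambda>_. borel) e UNIV"
   and int: "\<And>i. integrable M (e i)" and int2: "\<And>i. integrable M (\<lambda>\<omega>. (e i \<omega>)\<^sup>2)"
   and mean: "\<And>i. expectation (e i) = 0" and var: "\<And>i. expectation (\<lambda>\<omega>. (e i \<omega>)\<^sup>2) = s"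
  shows "integrable M (\<lambda>\<omega>. (\<Sum>i<n. e i \<omega>)\<^sup>2)"
    and "expectation (\<lambda>\<omega>. (\<Sum>i<n. e i \<omega>)\<^sup>2) = real n * s"
proof -
  have pij: "integrable M (\<lambda>\<omega>. e i \<omega> * e j \<omega>) \<and>
       expectation (\<lambda>\<omega>. e i \<omega> * e j \<omega>) = (if i = j then s else 0)" for i j
  proof (cases "i = j")
    case True
    then show ?thesis using int2[of i] var[of i] by (simp add: power2_eq_square)
  next
    case False
    have I: "indep_vars (\<lambda>_. borel) e {i, j}" by (rule indep_vars_subset[OF ind]) auto
    have "integrable M (\<lambda>\<omega>. \<Prod>k\<in>{i,j}. e k \<omega>)"
      by (rule indep_vars_integrable[OF _ I]) (use int in auto)
    moreover have "expectation (\<lambda>\<omega>. \<Prod>k\<in>{i,j}. e k \<omega>) = (\<Prod>k\<in>{i,j}. expectation (e k))"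
      by (rule indep_vars_lebesgue_integral[OF _ I]) (use int in auto)
    ultimately show ?thesis using False mean by simp
  qed
  have sq: "(\<Sum>i<n. e i \<omega>)\<^sup>2 = (\<Sum>i<n. \<Sum>j<n. e i \<omega> * e j \<omega>)" for \<omega>
    by (simp add: power2_eq_square sum_product)
  show "integrable M (\<lambda>\<omega>. (\<Sum>i<n. e i \<omega>)\<^sup>2)"
    unfolding sq by (intro Bochner_Integration.integrable_sum) (use pij in auto)
  have "expectation (\<lambda>\<omega>. (\<Sum>i<n. e i \<omega>)\<^sup>2) = (\<Sum>i<n. \<Sum>j<n. expectation (\<lambda>\<omega>. e i \<omega> * e j \<omega>))"
    unfolding sq using pij by (simp add: integral_sum integrable_sum)
  also have "\<dots> = (\<Sum>i<n. \<Sum>j<n. (if i = j then s else 0))" using pij by simp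
  also have "\<dots> = real n * s" by simp
  finally show "expectation (\<lambda>\<omega>. (\<Sum>i<n. e i \<omega>)\<^sup>2) = real n * s" .
qed

theorem lemmaA1:
  fixes M :: "'a measure"
    and X :: "nat \<Rightarrow> 'a \<Rightarrow> 'h::{real_inner, complete_space, second_countable_topology}"
    and Y eps :: "nat \<Rightarrow> 'a \<Rightarrow> real"
    and \<alpha> :: real and \<beta> :: 'h
    and ahat :: "nat \<Rightarrow> 'a \<Rightarrow> real" and bhat :: "nat \<Rightarrow> 'a \<Rightarrow> 'h"
  assumes P: "prob_space M"
    and X_meas: "\<And>i. X i \<in> borel_measurable M"
    and eps_meas: "\<And>i. eps i \<in> borel_measurable M"
    and X_indep: "prob_space.indep_vars M (\<lambda>_. borel) X UNIV"
    and X_ident: "\<And>i. distr M borel (X i) = distr M borel (X 0)"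
    and eps_indep: "prob_space.indep_vars M (\<lambda>_. borel) eps UNIV"
    and eps_ident: "\<And>i. distr M borel (eps i) = distr M borel (eps 0)"
    and X_eps_indep: "prob_space.indep_set M
          (sets (vimage_algebra (space M) (\<lambda>\<omega> i. X i \<omega>) (Pi\<^sub>M UNIV (\<lambda>_. borel))))
          (sets (vimage_algebra (space M) (\<lambda>\<omega> i. eps i \<omega>) (Pi\<^sub>M UNIV (\<lambda>_. borel))))"
    and model: "\<And>i \<omega>. \<omega> \<in> space M \<Longrightarrow> Y i \<omega> = \<alpha> + X i \<omega> \<bullet> \<beta> + eps i \<omega>"
    and eps_int: "integrable M (eps 0)"
    and eps_centred: "integral\<^sup>L M (eps 0) = 0"
    and cdf: "\<exists>f f'. (\<forall>t. ((\<lambda>s. measure M {\<omega> \<in> space M. eps 0 \<omega> \<le> s}) has_real_derivative f t) (at t))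
                 \<and> (\<forall>t. (f has_real_derivative f' t) (at t))
                 \<and> bounded (range f) \<and> bounded (range f')"
    and ahat_meas: "\<And>n. ahat n \<in> borel_measurable M"
    and bhat_meas: "\<And>n. bhat n \<in> borel_measurable M"
    and cases:
      "((\<forall>n. \<forall>\<omega>\<in>space M. ahat n \<omega> =
            (\<Sum>i<n. Y i \<omega>) / real n - ((1 / real n) *\<^sub>R (\<Sum>i<n. X i \<omega>)) \<bullet> bhat n \<omega>)
        \<and> o_P M (\<lambda>n \<omega>. norm (bhat n \<omega> - \<beta>)) (\<lambda>n. real n powr (-1/4))
        \<and> integrable M (\<lambda>\<omega>. norm (X 0 \<omega>) ^ 4)
        \<and> integrable M (\<lambda>\<omega>. (eps 0 \<omega>)\<^sup>2))
       \<or>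
       (\<alpha> = 0 \<and> (\<forall>n. \<forall>\<omega>\<in>space M. ahat n \<omega> = 0)
        \<and> o_P M (\<lambda>n \<omega>. norm (bhat n \<omega> - \<beta>)) (\<lambda>n. real n powr (-1/4))
        \<and> integrable M (X 0) \<and> integral\<^sup>L M (X 0) = 0
        \<and> integrable M (\<lambda>\<omega>. norm (X 0 \<omega>) ^ 2))"
  shows "o_P M (\<lambda>n \<omega>. (1 / sqrt (real n)) *
            (\<Sum>j<n. ((Y j \<omega> - ahat n \<omega> - X j \<omega> \<bullet> bhat n \<omega>) - eps j \<omega>)\<^sup>2)) (\<lambda>_. 1)"
proof -
  interpret prob_space M by (rule P)
  note [measurable] = X_meas eps_meas bhat_meas ahat_meas
  define A where "A n \<omega> = sqrt (real n) * (norm (bhat n \<omega> - \<beta>))\<^sup>2" for n \<omega>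
  define B where "B n \<omega> = (\<Sum>j<n. (norm (X j \<omega>))\<^sup>2) / real n" for n \<omega>
  define K where "K = expectation (\<lambda>\<omega>. (norm (X 0 \<omega>))\<^sup>2)"
  have measA: "\<And>n. A n \<in> borel_measurable M" unfolding A_def by measurable
  have measB: "\<And>n. B n \<in> borel_measurable M" unfolding B_def by measurable
  have nnB: "\<And>n \<omega>. \<omega> \<in> space M \<Longrightarrow> 0 \<le> B n \<omega>" unfolding B_def by (simp add: sum_nonneg)
  have oD: "o_P M (\<lambda>n \<omega>. norm (bhat n \<omega> - \<beta>)) (\<lambda>n. real n powr (-1/4))"
    using cases by blast
  have oA: "o_P M A (\<lambda>_. 1)"
    using rate_oP[OF oD] unfolding A_def by simp
  have intX2: "integrable M (\<lambda>\<omega>. (norm (X 0 \<omega>))\<^sup>2)"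
    using cases
  proof (elim disjE conjE)
    assume i4: "integrable M (\<lambda>\<omega>. norm (X 0 \<omega>) ^ 4)"
    show ?thesis
    proof (rule Bochner_Integration.integrable_bound[where f="\<lambda>\<omega>. 1 + norm (X 0 \<omega>) ^ 4"])
      show "integrable M (\<lambda>\<omega>. 1 + norm (X 0 \<omega>) ^ 4)" using i4 by simp
      show "(\<lambda>\<omega>. (norm (X 0 \<omega>))\<^sup>2) \<in> borel_measurable M" by measurable
      show "AE \<omega> in M. norm ((norm (X 0 \<omega>))\<^sup>2) \<le> norm (1 + norm (X 0 \<omega>) ^ 4)"
      proof (intro AE_I2)
        fix \<omega>
        define x where "x = norm (X 0 \<omega>)"
        have x0: "0 \<le> x" unfolding x_def by simp
        have "x\<^sup>2 \<le> 1 + x ^ 4"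
        proof (cases "x \<le> 1")
          case True
          then have "x\<^sup>2 \<le> 1" using x0 by (simp add: power_le_one)
          then show ?thesis by (simp add: add_increasing2)
        next
          case False
          then have "x\<^sup>2 \<le> x ^ 4" by (intro power_increasing) auto
          then show ?thesis by simp
        qed
        then show "norm ((norm (X 0 \<omega>))\<^sup>2) \<le> norm (1 + norm (X 0 \<omega>) ^ 4)"
          unfolding x_def[symmetric] using x0 by simp
      qed
    qed
  qed auto
  have fX: "(\<lambda>x::'h. (norm x)\<^sup>2) \<in> borel_measurable borel" by measurable
  have intXj: "integrable M (\<lambda>\<omega>. (norm (X j \<omega>))\<^sup>2)" for j
    using ident_transfer(1)[OF X_ident[of j] X_meas X_meas fX] intX2 by simp
  have EXj: "expectation (\<lambda>\<omega>. (norm (X j \<omega>))\<^sup>2) = K" for j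
    using ident_transfer(2)[OF X_ident[of j] X_meas X_meas fX] unfolding K_def by simp
  have K0: "0 \<le> K" unfolding K_def by (intro integral_nonneg_AE AE_I2) simp
  have intB: "integrable M (B n)" for n
    unfolding B_def using intXj by simp
  have EB: "expectation (B n) \<le> K" for n
  proof -
    have "expectation (B n) = (\<Sum>j<n. expectation (\<lambda>\<omega>. (norm (X j \<omega>))\<^sup>2)) / real n"
      unfolding B_def using intXj by (simp add: integral_sum)
    also have "\<dots> = (if n = 0 then 0 else K)" using EXj by simp
    also have "\<dots> \<le> K" using K0 by simp
    finally show ?thesis .
  qed
  show ?thesis
    using cases
  proof (elim disjE conjE)
    assume a0: "\<alpha> = 0" and ah0: "\<forall>n. \<forall>\<omega>\<in>space M. ahat n \<omega> = 0"
    show ?thesis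
    proof (rule mult_oP[OF measA measB oA intB nnB EB])
      fix n \<omega> assume w: "\<omega> \<in> space M"
      show "\<bar>(1 / sqrt (real n)) *
            (\<Sum>j<n. ((Y j \<omega> - ahat n \<omega> - X j \<omega> \<bullet> bhat n \<omega>) - eps j \<omega>)\<^sup>2)\<bar> \<le> \<bar>A n \<omega>\<bar> * B n \<omega>"
        unfolding A_def B_def
        by (rule pw_ii[where Y="\<lambda>i. Y i \<omega>" and X="\<lambda>i. X i \<omega>" and eps="\<lambda>i. eps i \<omega>" and \<beta>=\<beta>])
           (use model[OF w] a0 ah0 w in auto)
    qed
  next
    assume ah: "\<forall>n. \<forall>\<omega>\<in>space M. ahat n \<omega> =
            (\<Sum>i<n. Y i \<omega>) / real n - ((1 / real n) *\<^sub>R (\<Sum>i<n. X i \<omega>)) \<bullet> bhat n \<omega>"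
      and e2: "integrable M (\<lambda>\<omega>. (eps 0 \<omega>)\<^sup>2)"
    define C where "C n \<omega> = \<bar>2 * sqrt (real n) * ((\<Sum>j<n. eps j \<omega>) / real n)\<^sup>2\<bar>" for n \<omega>
    define A' where "A' n \<omega> = A n \<omega> * (8 * B n \<omega>)" for n \<omega>
    have measA': "\<And>n. A' n \<in> borel_measurable M" unfolding A'_def A_def B_def by measurable
    have measC: "\<And>n. C n \<in> borel_measurable M" unfolding C_def by measurable
    have oA': "o_P M A' (\<lambda>_. 1)"
    proof (rule mult_oP[OF measA _ oA, where B="\<lambda>n \<omega>. 8 * B n \<omega>" and K="8 * K"])
      show "(\<lambda>\<omega>. 8 * B n \<omega>) \<in> borel_measurable M" for n using measB by measurable
      show "integrable M (\<lambda>\<omega>. 8 * B n \<omega>)" for n using intB by simp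
      show "0 \<le> 8 * B n \<omega>" if "\<omega> \<in> space M" for n \<omega> using nnB that by simp
      show "expectation (\<lambda>\<omega>. 8 * B n \<omega>) \<le> 8 * K" for n using EB[of n] by simp
      show "\<bar>A' n \<omega>\<bar> \<le> \<bar>A n \<omega>\<bar> * (8 * B n \<omega>)" if "\<omega> \<in> space M" for n \<omega>
        unfolding A'_def using nnB[OF that, of n] by (simp add: abs_mult)
    qed
    have fid: "(\<lambda>x::real. x) \<in> borel_measurable borel" by measurable
    have fsq: "(\<lambda>x::real. x\<^sup>2) \<in> borel_measurable borel" by measurable
    define s where "s = expectation (\<lambda>\<omega>. (eps 0 \<omega>)\<^sup>2)"
    have inte: "integrable M (eps i)" for i
      using ident_transfer(1)[OF eps_ident[of i] eps_meas eps_meas fid] eps_int by simp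
    have meane: "expectation (eps i) = 0" for i
      using ident_transfer(2)[OF eps_ident[of i] eps_meas eps_meas fid] eps_centred by simp
    have inte2: "integrable M (\<lambda>\<omega>. (eps i \<omega>)\<^sup>2)" for i
      using ident_transfer(1)[OF eps_ident[of i] eps_meas eps_meas fsq] e2 by simp
    have vare: "expectation (\<lambda>\<omega>. (eps i \<omega>)\<^sup>2) = s" for i
      using ident_transfer(2)[OF eps_ident[of i] eps_meas eps_meas fsq] unfolding s_def by simp
    note VS = var_sum[OF eps_indep inte inte2 meane vare]
    have Ceq: "C n \<omega> = (2 * sqrt (real n) / (real n)\<^sup>2) * (\<Sum>j<n. eps j \<omega>)\<^sup>2" for n \<omega>
      unfolding C_def by (simp add: power_divide)
    have oC: "o_P M C (\<lambda>_. 1)"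
    proof (rule markov_oP[OF measC])
      show "integrable M (C n)" for n unfolding Ceq using VS(1)[of n] by simp
      show "0 \<le> C n \<omega>" for n \<omega> unfolding C_def by simp
      have E: "expectation (C n) = s * (2 * (sqrt (real n) * real n / (real n)\<^sup>2))" for n
        unfolding Ceq using VS(2)[of n] by simp
      have "(\<lambda>n. sqrt (real n) * real n / (real n)\<^sup>2) \<longlonglongrightarrow> 0"
        by real_asymp
      then have "(\<lambda>n. s * (2 * (sqrt (real n) * real n / (real n)\<^sup>2))) \<longlonglongrightarrow> s * (2 * 0)"
        by (intro tendsto_mult tendsto_const)
      then show "(\<lambda>n. expectation (C n)) \<longlonglongrightarrow> 0" unfolding E by simp
    qed
    show ?thesis
    proof (rule add_oP[OF measA' measC oA' oC])
      fix n \<omega> assume w: "\<omega> \<in> space M"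
      show "\<bar>(1 / sqrt (real n)) *
            (\<Sum>j<n. ((Y j \<omega> - ahat n \<omega> - X j \<omega> \<bullet> bhat n \<omega>) - eps j \<omega>)\<^sup>2)\<bar> \<le> \<bar>A' n \<omega>\<bar> + \<bar>C n \<omega>\<bar>"
      proof -
        have p: "\<bar>(1 / sqrt (real n)) *
            (\<Sum>j<n. ((Y j \<omega> - ahat n \<omega> - X j \<omega> \<bullet> bhat n \<omega>) - eps j \<omega>)\<^sup>2)\<bar> \<le> \<bar>A n \<omega>\<bar> * (8 * B n \<omega>) + C n \<omega>"
          unfolding A_def B_def C_def
          by (rule pw_i[where Y="\<lambda>i. Y i \<omega>" and X="\<lambda>i. X i \<omega>" and eps="\<lambda>i. eps i \<omega>" and \<beta>=\<beta>
            and \<alpha>=\<alpha>]) (use model[OF w] ah w in auto)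
        have "\<bar>A' n \<omega>\<bar> = \<bar>A n \<omega>\<bar> * (8 * B n \<omega>)"
          unfolding A'_def using nnB[OF w, of n] by (simp add: abs_mult)
        moreover have "\<bar>C n \<omega>\<bar> = C n \<omega>" unfolding C_def by simp
        ultimately show ?thesis using p by simp
      qed
    qed
  qed
qed

end
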